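(* Let $d\in\mathbb{N}$ and let $S\subset\mathbb{R}^d$ be a measurable set with complement $S^c=\mathbb{R}^d\setminus S$. Then $S$ is thick if and only if $\beta(S^c)<1$, where \[ \beta(S^c):=\lim_{r\to +\infty}\ \sup_{x\in\mathbb{R}^d} \frac{|S^c\cap B(x,r)|}{|B(x,r)|}. \]
   Context: $|\cdot|$ denotes Lebesgue measure on $\mathbb{R}^d$ and $B(x,r)$ the open Euclidean ball of radius $r>0$ centered at $x$. A set $S\subset\mathbb{R}^d$ is called thick if it is measurable and there exist $\gamma\in(0,1]$ and $a=(a_1,\dots,a_d)\in(0,\infty)^d$ such that $|S\cap (x+[0,a_1]\times\dots\times[0,a_d])|\ge \gamma\prod_{j=1}^d a_j$ for all $x\in\mathbb{R}^d$; equivalently, there exist $\gamma\in(0,1]$ and $r>0$ such that $|S\cap B(x,r)|\ge\gamma|B(x,r)|$ for all $x\in\mathbb{R}^d$. *)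

theory Defs
  imports "HOL-Analysis.Analysis"
begin

definition thick :: "'a::euclidean_space set \<Rightarrow> bool" where
  "thick S \<longleftrightarrow> S \<in> sets lebesgue \<and>
     (\<exists>\<gamma>::real. \<exists>a::'a. 0 < \<gamma> \<and> \<gamma> \<le> 1 \<and> (\<forall>i\<in>Basis. 0 < a \<bullet> i) \<and>
       (\<forall>x. measure lebesgue (S \<inter> cbox x (x + a)) \<ge> \<gamma> * (\<Prod>i\<in>Basis. a \<bullet> i)))"

definition beta :: "'a::euclidean_space set \<Rightarrow> real" where
  "beta E = Lim at_top (\<lambda>r::real. SUP x. measure lebesgue (E \<inter> ball x r) / measure lebesgue (ball x r))"

end

theory Submission imports Defs "HOL-Real_Asymp.Real_Asymp" begin

lemma key_borel:
  fixes E :: "'a::euclidean_space set"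
  assumes E: "E \<in> sets lborel" and r: "r > 0" and R: "R \<ge> 0"
   and c: "\<And>y. emeasure lborel (E \<inter> ball y r) \<le> c * emeasure lborel (ball y r)"
  shows "emeasure lborel (ball (0::'a) r) * emeasure lborel (E \<inter> ball x R)
     \<le> emeasure lborel (ball (0::'a) r) * (c * emeasure lborel (ball x (R+r)))"
proof -
  define V where "V = emeasure lborel (ball (0::'a) r)"
  have Vy: "emeasure lborel (ball (y::'a) r) = V" for y unfolding V_def using r by (simp add: emeasure_ball)
  define B where "B = ball x (R+r)"
  have Bm[measurable]: "B \<in> sets borel" unfolding B_def by simp
  have mz: "(\<lambda>y. indicator B y * (if dist z y < r then 1 else 0 :: ennreal)) \<in> borel_measurable borel" for z
    by measurable
  have mes: "(\<lambda>(z,y). indicator E z * indicator B y * (if dist z y < r then 1 else 0 :: ennreal))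
      \<in> borel_measurable (lborel \<Otimes>\<^sub>M lborel)"
  proof -
    have [measurable]: "B \<in> sets borel" unfolding B_def by simp
    have d: "(\<lambda>p::'a\<times>'a. dist (fst p) (snd p)) \<in> borel_measurable (lborel \<Otimes>\<^sub>M lborel)"
      by (intro borel_measurable_dist) (simp_all add: measurable_cong_sets[OF _ sets_lborel] cong: measurable_cong_sets)
    have [measurable]: "Measurable.pred (lborel \<Otimes>\<^sub>M lborel) (\<lambda>p::'a\<times>'a. dist (fst p) (snd p) < r)"
      using d by measurable
    show ?thesis using E by measurable
  qed
  have "V * emeasure lborel (E \<inter> ball x R) = (\<integral>\<^sup>+z. V * indicator (E \<inter> ball x R) z \<partial>lborel)"
    using E by (simp add: nn_integral_cmult_indicator)
  also have "\<dots> \<le> (\<integral>\<^sup>+z. indicator E z * (\<integral>\<^sup>+y. indicator B y * (if dist z y < r then 1 else 0) \<partial>lborel) \<partial>lborel)"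
  proof (rule nn_integral_mono)
    fix z
    show "V * indicator (E \<inter> ball x R) z \<le> indicator E z * (\<integral>\<^sup>+y. indicator B y * (if dist z y < r then 1 else 0) \<partial>lborel)"
    proof (cases "z \<in> E \<inter> ball x R")
      case True
      have "(\<integral>\<^sup>+y. indicator B y * (if dist z y < r then 1 else 0) \<partial>lborel) = (\<integral>\<^sup>+y. indicator (ball z r) y \<partial>lborel)"
      proof (rule nn_integral_cong)
        fix y
        have "dist z y < r \<Longrightarrow> dist x y < R + r" using True dist_triangle[of x y z] by auto
        then show "indicator B y * (if dist z y < r then 1 else 0) = (indicator (ball z r) y :: ennreal)"
          unfolding B_def by (auto simp: indicator_def)
      qed
      also have "\<dots> = V" using Vy by simp
      finally show ?thesis using True by simp
    qed simp
  qed
  also have "\<dots> = (\<integral>\<^sup>+z. \<integral>\<^sup>+y. indicator E z * indicator B y * (if dist z y < r then 1 else 0) \<partial>lborel \<partial>lborel)"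
    by (subst nn_integral_cmult[symmetric]) (auto simp: mult.assoc mz)
  also have "\<dots> = (\<integral>\<^sup>+y. \<integral>\<^sup>+z. indicator E z * indicator B y * (if dist z y < r then 1 else 0) \<partial>lborel \<partial>lborel)"
    by (rule lborel_pair.Fubini'[symmetric]) (use mes in simp)
  also have "\<dots> = (\<integral>\<^sup>+y. indicator B y * emeasure lborel (E \<inter> ball y r) \<partial>lborel)"
  proof (rule nn_integral_cong)
    fix y
    have "(\<integral>\<^sup>+z. indicator E z * indicator B y * (if dist z y < r then 1 else 0) \<partial>lborel)
       = (\<integral>\<^sup>+z. indicator B y * indicator (E \<inter> ball y r) z \<partial>lborel)"
      by (rule nn_integral_cong) (auto simp: indicator_def dist_commute)
    also have "\<dots> = indicator B y * emeasure lborel (E \<inter> ball y r)"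
      using E by (subst nn_integral_cmult) (auto intro!: borel_measurable_indicator sets.Int)
    finally show "(\<integral>\<^sup>+z. indicator E z * indicator B y * (if dist z y < r then 1 else 0) \<partial>lborel)
       = indicator B y * emeasure lborel (E \<inter> ball y r)" .
  qed
  also have "\<dots> \<le> (\<integral>\<^sup>+y. (c * V) * indicator B y \<partial>lborel)"
    by (rule nn_integral_mono) (use c Vy in \<open>auto simp: indicator_def\<close>)
  also have "\<dots> = c * V * emeasure lborel B"
    unfolding B_def by (simp add: nn_integral_cmult_indicator)
  finally show ?thesis unfolding V_def B_def by (simp add: mult_ac)
qed


lemma key_real:
  fixes E :: "'a::euclidean_space set"
  assumes E: "E \<in> sets lebesgue" and r: "r>0" and R: "R \<ge> 0" and c: "c \<ge> 0"
   and h: "\<And>y. measure lebesgue (E \<inter> ball y r) \<le> c * measure lebesgue (ball y r)"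
  shows "measure lebesgue (E \<inter> ball x R) \<le> c * measure lebesgue (ball x (R+r))"
proof -
  define E' where "E' = main_part lborel E"
  have E': "E' \<in> sets lborel" unfolding E'_def by (rule main_part_sets[OF E])
  have ae: "AE z in lborel. z \<in> E' \<longleftrightarrow> z \<in> E" unfolding E'_def using AE_in_main_part[OF E] by simp
  have eq: "emeasure lebesgue (E \<inter> A) = emeasure lborel (E' \<inter> A)" if A: "A \<in> sets lborel" for A
  proof -
    have "emeasure lebesgue (E \<inter> A) = (\<integral>\<^sup>+z. indicator (E \<inter> A) z \<partial>lebesgue)"
      using E A by (simp add: sets.Int)
    also have "\<dots> = (\<integral>\<^sup>+z. indicator (E \<inter> A) z \<partial>lborel)" by (rule nn_integral_completion)
    also have "\<dots> = (\<integral>\<^sup>+z. indicator (E' \<inter> A) z \<partial>lborel)"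
      apply (rule nn_integral_cong_AE) using ae by eventually_elim (auto simp: indicator_def)
    also have "\<dots> = emeasure lborel (E' \<inter> A)" using E' A by simp
    finally show ?thesis .
  qed
  have fin: "emeasure lborel (E' \<inter> ball y s) \<noteq> top" for y s
    using emeasure_bounded_finite[of "E' \<inter> ball y s"] bounded_Int[of "ball y s" "E'"] by (auto simp: Int_commute)
  have finb: "emeasure lborel (ball y s) \<noteq> top" for y :: 'a and s
    using emeasure_bounded_finite[of "ball y s"] by auto
  have m: "measure lebesgue (E \<inter> ball y s) = measure lborel (E' \<inter> ball y s)" for y s
    unfolding measure_def using eq[of "ball y s"] by simp
  have mb: "measure lebesgue (ball y s) = measure lborel (ball y s)" for y :: 'a and s by simp
  have hyp: "emeasure lborel (E' \<inter> ball y r) \<le> ennreal c * emeasure lborel (ball y r)" for y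
  proof -
    have "emeasure lborel (E' \<inter> ball y r) = ennreal (measure lborel (E' \<inter> ball y r))"
      using fin by (simp add: emeasure_eq_ennreal_measure)
    also have "\<dots> \<le> ennreal (c * measure lborel (ball y r))"
      using h[of y] m mb by (intro ennreal_leI) simp
    also have "\<dots> = ennreal c * emeasure lborel (ball y r)"
      using finb c by (simp add: emeasure_eq_ennreal_measure ennreal_mult)
    finally show ?thesis .
  qed
  note k = key_borel[OF E' r R hyp, of x]
  have V0: "emeasure lborel (ball (0::'a) r) \<noteq> 0" "emeasure lborel (ball (0::'a) r) \<noteq> top"
    using r by (simp_all add: emeasure_ball order.strict_iff_not[THEN iffD1, OF unit_ball_vol_pos] less_imp_neq[OF unit_ball_vol_pos, symmetric])
  have "emeasure lborel (E' \<inter> ball x R) \<le> ennreal c * emeasure lborel (ball x (R+r))"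
    using ennreal_mult_le_mult_iff[OF V0, THEN iffD1, OF k] .
  then have "ennreal (measure lborel (E' \<inter> ball x R)) \<le> ennreal (c * measure lborel (ball x (R+r)))"
    using fin finb c by (simp add: emeasure_eq_ennreal_measure ennreal_mult)
  then have "measure lborel (E' \<inter> ball x R) \<le> c * measure lborel (ball x (R+r))"
    using c by (simp add: ennreal_le_iff)
  then show ?thesis using m mb by simp
qed


lemma Int_lmeas: "S \<in> sets lebesgue \<Longrightarrow> T \<in> lmeasurable \<Longrightarrow> S \<inter> T \<in> lmeasurable"
  by (rule fmeasurableI2[of T]) (auto intro: sets.Int fmeasurableD)

lemma One_inner_Basis: "i \<in> Basis \<Longrightarrow> (One::'a::euclidean_space) \<bullet> i = 1"
  by (simp add: inner_sum_left inner_Basis sum.delta)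

theorem lemma2p3:
  fixes S :: "'a::euclidean_space set"
  assumes "S \<in> sets lebesgue"
  shows "thick S \<longleftrightarrow> beta (- S) < 1"
proof -
  define E where "E = - S"
  have Sm: "S \<in> sets lebesgue" by fact
  have E: "E \<in> sets lebesgue" unfolding E_def using sets.compl_sets[OF Sm] by (simp add: Compl_eq_Diff_UNIV)
  define V where "V s = unit_ball_vol DIM('a) * s ^ DIM('a)" for s :: real
  have mb: "measure lebesgue (ball (y::'a) s) = V s" if "s \<ge> 0" for y s
    using that by (simp add: content_ball V_def)
  have ubv: "unit_ball_vol (real DIM('a)) \<noteq> 0"
    using unit_ball_vol_pos[of "real DIM('a)"] by linarith
  have Vpos: "V s > 0" if "s > 0" for s using that by (simp add: V_def)
  define q where "q x s = measure lebesgue (E \<inter> ball x s) / measure lebesgue (ball x s)" for x :: 'a and s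
  define f where "f s = (SUP x. q x s)" for s
  have q01: "0 \<le> q x s \<and> q x s \<le> 1" for x s
  proof -
    have "measure lebesgue (E \<inter> ball x s) \<le> measure lebesgue (ball x s)"
      by (rule measure_mono_fmeasurable) (use E in auto)
    then show ?thesis unfolding q_def by (auto simp: divide_le_eq_1)
  qed
  have bdd: "bdd_above (range (\<lambda>x. q x s))" for s by (rule bdd_aboveI[of _ 1]) (use q01 in auto)
  have qle: "q x s \<le> f s" for x s unfolding f_def by (rule cSUP_upper[OF _ bdd]) simp
  have f0: "0 \<le> f s" for s using qle[of 0 s] q01[of 0 s] by simp
  have f1: "f s \<le> 1" for s unfolding f_def by (rule cSUP_least) (use q01 in auto)
  have mono: "f R \<le> f r * ((R + r) / R) ^ DIM('a)" if r: "r > 0" and R: "R > 0" for r R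
  proof -
    have h: "measure lebesgue (E \<inter> ball y r) \<le> f r * measure lebesgue (ball y r)" for y
      using qle[of y r] Vpos[OF r] mb[of r y] r unfolding q_def by (simp add: divide_le_eq)
    have "q x R \<le> f r * ((R + r) / R) ^ DIM('a)" for x
    proof -
    have "measure lebesgue (E \<inter> ball x R) \<le> f r * V (R + r)"
      using key_real[OF E r _ f0 h, of R x] R r mb[of "R+r" x] by simp
    then have "q x R \<le> f r * V (R + r) / V R"
      unfolding q_def using mb[of R x] R Vpos[OF R] by (simp add: divide_right_mono)
    also have "\<dots> = f r * ((R + r) / R) ^ DIM('a)"
      using Vpos[OF R] R ubv unfolding V_def by (simp add: power_divide)
    finally show ?thesis .
    qed
    then show ?thesis unfolding f_def[of R] by (intro cSUP_least) auto
  qed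
  define L where "L = Inf (f ` {0<..})"
  have bddb: "bdd_below (f ` {0<..})" by (rule bdd_belowI[of _ 0]) (use f0 in auto)
  have fL: "L \<le> f s" if "s > 0" for s unfolding L_def using that bddb by (auto intro: cInf_lower)
  have lim: "(f \<longlongrightarrow> L) at_top"
  proof (rule order_tendstoI)
    fix a assume "a < L"
    then show "eventually (\<lambda>R. a < f R) at_top"
      using fL by (intro eventually_mono[OF eventually_gt_at_top[of "0::real"]]) force
  next
    fix a assume "L < a"
    then obtain r where r: "r > 0" "f r < a"
      unfolding L_def using cInf_lessD[of "f ` {0<..}" a] by auto
    have "((\<lambda>R. (R + r) / R) \<longlongrightarrow> 1) at_top" by real_asymp
    then have "((\<lambda>R. f r * ((R + r) / R) ^ DIM('a)) \<longlongrightarrow> f r * 1 ^ DIM('a)) at_top"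
      by (intro tendsto_intros)
    then have "eventually (\<lambda>R. f r * ((R + r) / R) ^ DIM('a) < a) at_top"
      using r by (intro order_tendstoD(2)) auto
    then show "eventually (\<lambda>R. f R < a) at_top"
      using eventually_gt_at_top[of "0::real"]
      by eventually_elim (use mono[OF r(1)] in force)
  qed
  have betaL: "beta E = L"
  proof -
    have "beta E = Lim at_top f" unfolding beta_def f_def q_def by simp
    also have "\<dots> = L" by (rule tendsto_Lim[OF trivial_limit_at_top_linorder lim])
    finally show ?thesis .
  qed
  have b1: "beta E < 1 \<longleftrightarrow> (\<exists>r>0. f r < 1)"
    unfolding betaL L_def using cInf_less_iff[OF _ bddb, of 1] by auto
  have compl: "measure lebesgue (E \<inter> ball x s) = measure lebesgue (ball x s) - measure lebesgue (S \<inter> ball x s)" for x s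
  proof -
    have "E \<inter> ball x s = ball x s - (S \<inter> ball x s)" unfolding E_def by auto
    moreover have fin: "emeasure lebesgue (ball x s) \<noteq> \<infinity>"
      using emeasure_bounded_finite[of "ball x s"] by simp
    moreover have "S \<inter> ball x s \<in> sets lebesgue" using Sm by (intro sets.Int) auto
    ultimately show ?thesis
      using measure_Diff[OF fin, of "S \<inter> ball x s"] by simp
  qed
  have "thick S \<longleftrightarrow> (\<exists>r>0. f r < 1)"
  proof
    assume "thick S"
    then obtain \<gamma> :: real and a :: 'a where g: "0 < \<gamma>" and a: "\<forall>i\<in>Basis. 0 < a \<bullet> i"
      and th: "\<And>x. measure lebesgue (S \<inter> cbox x (x + a)) \<ge> \<gamma> * (\<Prod>i\<in>Basis. a \<bullet> i)"
      unfolding thick_def by blast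
    define R where "R = (\<Sum>i\<in>Basis. a \<bullet> i) + 1"
    have sa: "0 \<le> (\<Sum>i\<in>Basis. a \<bullet> i)" using a by (intro sum_nonneg) (auto intro: less_imp_le)
    have Rpos: "R > 0" unfolding R_def using sa by linarith
    define \<delta> where "\<delta> = \<gamma> * (\<Prod>i\<in>Basis. a \<bullet> i)"
    have dpos: "\<delta> > 0" unfolding \<delta>_def using g a by (simp add: prod_pos)
    have low: "measure lebesgue (S \<inter> ball x R) \<ge> \<delta>" for x
    proof -
      define x0 where "x0 = x - (1/2) *\<^sub>R a"
      have sub: "cbox x0 (x0 + a) \<subseteq> ball x R"
      proof
        fix y assume y: "y \<in> cbox x0 (x0 + a)"
        have "\<bar>(y - x) \<bullet> i\<bar> \<le> (a \<bullet> i) / 2" if i: "i \<in> Basis" for i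
        proof -
          have "x \<bullet> i \<le> y \<bullet> i + a \<bullet> i / 2 \<and> y \<bullet> i \<le> x \<bullet> i + a \<bullet> i / 2"
            using y i unfolding mem_box x0_def by (auto simp: inner_diff_left algebra_simps)
          then show ?thesis unfolding inner_diff_left by linarith
        qed
        then have "(\<Sum>i\<in>Basis. \<bar>(y - x) \<bullet> i\<bar>) \<le> (\<Sum>i\<in>Basis. (a \<bullet> i) / 2)"
          by (intro sum_mono) auto
        moreover have "(\<Sum>i\<in>Basis. (a \<bullet> i) / 2) < R"
          unfolding R_def using sa by (simp add: sum_divide_distrib[symmetric])
        ultimately have "norm (y - x) < R" using norm_le_l1[of "y - x"] by linarith
        then show "y \<in> ball x R" by (simp add: dist_norm norm_minus_commute)
      qed
      have "\<delta> \<le> measure lebesgue (S \<inter> cbox x0 (x0 + a))" using th unfolding \<delta>_def by simp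
      also have "\<dots> \<le> measure lebesgue (S \<inter> ball x R)"
        by (rule measure_mono_fmeasurable) (use sub Sm in \<open>auto intro: Int_lmeas\<close>)
      finally show ?thesis .
    qed
    have "f R \<le> (V R - \<delta>) / V R"
      unfolding f_def
    proof (rule cSUP_least)
      fix x
      show "q x R \<le> (V R - \<delta>) / V R"
        unfolding q_def compl using mb[of R x] Rpos low[of x] Vpos[OF Rpos]
        by (simp add: divide_right_mono)
    qed simp
    also have "\<dots> < 1" using dpos Vpos[OF Rpos] by simp
    finally show "\<exists>r>0. f r < 1" using Rpos by blast
  next
    assume "\<exists>r>0. f r < 1"
    then obtain r where r: "r > 0" "f r < 1" by blast
    define a :: 'a where "a = (2 * r) *\<^sub>R One"
    define \<gamma> where "\<gamma> = min 1 ((1 - f r) * V r / (2 * r) ^ DIM('a))"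
    have ai: "a \<bullet> i = 2 * r" if "i \<in> Basis" for i unfolding a_def using that by (simp add: One_inner_Basis)
    have prod: "(\<Prod>i\<in>Basis. a \<bullet> i) = (2 * r) ^ DIM('a)"
      using ai by simp
    have gpos: "0 < \<gamma>" unfolding \<gamma>_def using r Vpos[OF r(1)] by simp
    have "\<gamma> * (\<Prod>i\<in>Basis. a \<bullet> i) \<le> measure lebesgue (S \<inter> cbox x (x + a))" for x
    proof -
      define c where "c = x + r *\<^sub>R One"
      have sub: "ball c r \<subseteq> cbox x (x + a)"
      proof
        fix y assume y: "y \<in> ball c r"
        have "x \<bullet> i < y \<bullet> i \<and> y \<bullet> i < x \<bullet> i + 2 * r" if "i \<in> Basis" for i
        proof -
          have "\<bar>(y - c) \<bullet> i\<bar> < r"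
            using Basis_le_norm[OF that, of "y - c"] y by (simp add: dist_norm norm_minus_commute)
          then have "\<bar>y \<bullet> i - x \<bullet> i - r\<bar> < r"
            unfolding c_def by (simp add: inner_diff_left inner_add_left One_inner_Basis[OF that] algebra_simps)
          then show ?thesis by (simp add: abs_less_iff)
        qed
        then show "y \<in> cbox x (x + a)"
          unfolding mem_box using ai by (auto simp: inner_add_left less_imp_le)
      qed
      have "measure lebesgue (E \<inter> ball c r) \<le> f r * V r"
        using qle[of c r] mb[of r c] r Vpos[OF r(1)] unfolding q_def by (simp add: divide_le_eq)
      then have m1: "(1 - f r) * V r \<le> measure lebesgue (S \<inter> ball c r)"
        using compl[of c r] mb[of r c] r by (simp add: algebra_simps)
      have "\<gamma> * (\<Prod>i\<in>Basis. a \<bullet> i) \<le> (1 - f r) * V r"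
        unfolding prod \<gamma>_def using r by (simp add: min_def divide_le_eq not_le)
      also note m1
      also have "measure lebesgue (S \<inter> ball c r) \<le> measure lebesgue (S \<inter> cbox x (x + a))"
        by (rule measure_mono_fmeasurable) (use sub Sm in \<open>auto intro: Int_lmeas\<close>)
      finally show ?thesis .
    qed
    moreover have "\<forall>i\<in>Basis. 0 < a \<bullet> i" using ai r by simp
    moreover have "\<gamma> \<le> 1" unfolding \<gamma>_def by simp
    ultimately show "thick S" unfolding thick_def using Sm gpos by blast
  qed
  then show ?thesis using b1 unfolding E_def by simp
qed

end
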